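(* Let $(G,P)$ be a quasi-lattice ordered group. The following are equivalent: (1) $(G,P)$ has a FESSPE; (2) $c_0(P)\subseteq B_P$; (3) $c_0(P)$ is an essential ideal in $B_P$; (4) $c_0(\iota(P))$ is an essential ideal in $\mathcal D$.
   Context: Quasi-lattice ordered group $(G,P)$: $G$ discrete, $P\subseteq G$ subsemigroup with $P\cap P^{-1}=\{e\}$, and for $x\le y\iff x^{-1}y\in P$ elements with a common upper bound in $P$ have a least one in $P$. A FESSPE is a finite $F\subseteq P\setminus\{e\}$ with $FP=P\setminus\{e\}$. For $s\in P$, $1_s\in\ell^\infty(P)$ is the characteristic function of $\{t\in P:s\le t\}$, and $B_P=\overline{\mathrm{span}}\{1_s:s\in P\}\subseteq\ell^\infty(P)$. On $\ell^2(P)$ with basis $\{\varepsilon_t\}$, $T_s\varepsilon_t=\varepsilon_{st}$ and $\mathcal D=\overline{\mathrm{span}}\{T_sT_s^*:s\in P\}$; note $T_sT_s^*$ is the multiplication operator $M_{1_s}$, so $\mathcal D=\{M_f:f\in B_P\}$. The spectrum of $\mathcal D$ is identified with Nica's space $\Omega$ of nonempty hereditary directed subsets of $P$, and $\iota:P\to\Omega$, $\iota(t)=\{s\in P:s\le t\}$; $c_0(\iota(P))$ denotes the set of multiplication operators $\{M_f:f\in c_0(P)\}$ on $\ell^2(P)$ (the functions on $\Omega$ supported on $\iota(P)$ vanishing at infinity there). *)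

theory Defs
  imports "HOL-Analysis.Analysis"
begin

text \<open>The discrete group G is a type of class group_add (not assumed commutative),
  written additively: the identity e is 0, the product is +, the inverse is unary minus.\<close>

definition pleq :: "'g::group_add set \<Rightarrow> 'g \<Rightarrow> 'g \<Rightarrow> bool" where
  "pleq P x y \<longleftrightarrow> - x + y \<in> P"

definition qlo :: "'g::group_add set \<Rightarrow> bool" where
  "qlo P \<longleftrightarrow>
     (\<forall>a\<in>P. \<forall>b\<in>P. a + b \<in> P) \<and>
     P \<inter> uminus ` P = {0} \<and>
     (\<forall>x y. (\<exists>z\<in>P. pleq P x z \<and> pleq P y z) \<longrightarrow>
        (\<exists>l\<in>P. pleq P x l \<and> pleq P y l \<and>
           (\<forall>z\<in>P. pleq P x z \<and> pleq P y z \<longrightarrow> pleq P l z)))"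

definition has_FESSPE :: "'g::group_add set \<Rightarrow> bool" where
  "has_FESSPE P \<longleftrightarrow> (\<exists>F. finite F \<and> F \<subseteq> P - {0} \<and>
      {f + p | f p. f \<in> F \<and> p \<in> P} = P - {0})"

text \<open>Elements of ell-infinity(P) are represented as functions on the whole group
  vanishing outside P, bounded on P.\<close>

definition linf :: "'g set \<Rightarrow> ('g \<Rightarrow> complex) set" where
  "linf P = {f. (\<forall>t. t \<notin> P \<longrightarrow> f t = 0) \<and> bounded (f ` P)}"

definition sup_dist :: "'g set \<Rightarrow> ('g \<Rightarrow> complex) \<Rightarrow> ('g \<Rightarrow> complex) \<Rightarrow> real" where
  "sup_dist P f g = (SUP t\<in>P. norm (f t - g t))"

definition ind :: "'g::group_add set \<Rightarrow> 'g \<Rightarrow> 'g \<Rightarrow> complex" where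
  "ind P s = (\<lambda>t. if t \<in> P \<and> pleq P s t then 1 else 0)"

definition span_ind :: "'g::group_add set \<Rightarrow> ('g \<Rightarrow> complex) set" where
  "span_ind P = {g. \<exists>S c. finite S \<and> S \<subseteq> P \<and> g = (\<lambda>t. \<Sum>s\<in>S. c s * ind P s t)}"

definition BP :: "'g::group_add set \<Rightarrow> ('g \<Rightarrow> complex) set" where
  "BP P = {f \<in> linf P. \<forall>e>0. \<exists>g\<in>span_ind P. sup_dist P f g < e}"

definition c0 :: "'g set \<Rightarrow> ('g \<Rightarrow> complex) set" where
  "c0 P = {f. (\<forall>t. t \<notin> P \<longrightarrow> f t = 0) \<and> (\<forall>e>0. finite {t\<in>P. e \<le> norm (f t)})}"

text \<open>Parameters: addition, multiplication, scalar multiplication, zero and metric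
  (induced by the norm) of the ambient algebra; A is the algebra, I the candidate ideal.\<close>

definition is_closed_ideal ::
  "('a \<Rightarrow> 'a \<Rightarrow> 'a) \<Rightarrow> ('a \<Rightarrow> 'a \<Rightarrow> 'a) \<Rightarrow> (complex \<Rightarrow> 'a \<Rightarrow> 'a) \<Rightarrow> 'a \<Rightarrow>
   ('a \<Rightarrow> 'a \<Rightarrow> real) \<Rightarrow> 'a set \<Rightarrow> 'a set \<Rightarrow> bool" where
  "is_closed_ideal pl mu sc z d A I \<longleftrightarrow>
     I \<subseteq> A \<and> z \<in> I \<and>
     (\<forall>x\<in>I. \<forall>y\<in>I. pl x y \<in> I) \<and>
     (\<forall>c. \<forall>x\<in>I. sc c x \<in> I) \<and>
     (\<forall>a\<in>A. \<forall>x\<in>I. mu a x \<in> I \<and> mu x a \<in> I) \<and>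
     (\<forall>a\<in>A. (\<forall>e>0. \<exists>x\<in>I. d a x < e) \<longrightarrow> a \<in> I)"

definition is_essential_ideal ::
  "('a \<Rightarrow> 'a \<Rightarrow> 'a) \<Rightarrow> ('a \<Rightarrow> 'a \<Rightarrow> 'a) \<Rightarrow> (complex \<Rightarrow> 'a \<Rightarrow> 'a) \<Rightarrow> 'a \<Rightarrow>
   ('a \<Rightarrow> 'a \<Rightarrow> real) \<Rightarrow> 'a set \<Rightarrow> 'a set \<Rightarrow> bool" where
  "is_essential_ideal pl mu sc z d A I \<longleftrightarrow>
     is_closed_ideal pl mu sc z d A I \<and>
     (\<forall>J. is_closed_ideal pl mu sc z d A J \<and> J \<noteq> {z} \<longrightarrow> I \<inter> J \<noteq> {z})"

definition fun_essential_ideal :: "'g set \<Rightarrow> ('g \<Rightarrow> complex) set \<Rightarrow> ('g \<Rightarrow> complex) set \<Rightarrow> bool" where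
  "fun_essential_ideal P A I =
     is_essential_ideal (\<lambda>f g t. f t + g t) (\<lambda>f g t. f t * g t) (\<lambda>c f t. c * f t)
       (\<lambda>t. 0) (sup_dist P) A I"

definition l2 :: "'g set \<Rightarrow> ('g \<Rightarrow> complex) set" where
  "l2 P = {x. (\<forall>t. t \<notin> P \<longrightarrow> x t = 0) \<and> (\<lambda>t. (norm (x t))\<^sup>2) summable_on P}"

definition l2norm :: "'g set \<Rightarrow> ('g \<Rightarrow> complex) \<Rightarrow> real" where
  "l2norm P x = sqrt (infsum (\<lambda>t. (norm (x t))\<^sup>2) P)"

type_synonym 'g op = "('g \<Rightarrow> complex) \<Rightarrow> ('g \<Rightarrow> complex)"

definition op_dist :: "'g set \<Rightarrow> 'g op \<Rightarrow> 'g op \<Rightarrow> real" where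
  "op_dist P S T = Sup {l2norm P (\<lambda>t. S x t - T x t) | x. x \<in> l2 P \<and> l2norm P x \<le> 1}"

definition mult_op :: "('g \<Rightarrow> complex) \<Rightarrow> 'g op" where
  "mult_op f = (\<lambda>x t. f t * x t)"

text \<open>The diagonal algebra D = {M_f : f in B_P} (= closed span of the T_s T_s^*).\<close>
definition Diag :: "'g::group_add set \<Rightarrow> 'g op set" where
  "Diag P = mult_op ` BP P"

definition c0_iota :: "'g set \<Rightarrow> 'g op set" where
  "c0_iota P = mult_op ` c0 P"

definition op_essential_ideal :: "'g set \<Rightarrow> 'g op set \<Rightarrow> 'g op set \<Rightarrow> bool" where
  "op_essential_ideal P A I =
     is_essential_ideal (\<lambda>S T x t. S x t + T x t) (\<lambda>S T. S \<circ> T) (\<lambda>c S x t. c * S x t)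
       (\<lambda>x t. 0) (op_dist P) A I"

end

theory Submission
  imports Defs
begin

lemma qlo_zero: "qlo P \<Longrightarrow> 0 \<in> P"
  unfolding qlo_def by blast

lemma qlo_add: "qlo P \<Longrightarrow> a \<in> P \<Longrightarrow> b \<in> P \<Longrightarrow> a + b \<in> P"
  unfolding qlo_def by blast

lemma qlo_antisym: "qlo P \<Longrightarrow> a \<in> P \<Longrightarrow> - a \<in> P \<Longrightarrow> a = 0"
proof -
  assume q: "qlo P" and a: "a \<in> P" and b: "- a \<in> P"
  have "a \<in> uminus ` P" using b by (metis image_eqI minus_minus)
  hence "a \<in> P \<inter> uminus ` P" using a by blast
  thus "a = 0" using q unfolding qlo_def by blast
qed

lemma pleq_trans: "qlo P \<Longrightarrow> pleq P x y \<Longrightarrow> pleq P y z \<Longrightarrow> pleq P x z"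
proof -
  assume q: "qlo P" and "pleq P x y" "pleq P y z"
  hence "(- x + y) + (- y + z) \<in> P" using qlo_add[OF q] unfolding pleq_def by blast
  moreover have "(- x + y) + (- y + z) = - x + z" by (simp add: add.assoc)
  ultimately show ?thesis unfolding pleq_def by simp
qed

lemma span_indI: "finite S \<Longrightarrow> S \<subseteq> P \<Longrightarrow> g = (\<lambda>t. \<Sum>s\<in>S. c s * ind P s t) \<Longrightarrow> g \<in> span_ind P"
  unfolding span_ind_def by blast

lemma span_zero: "(\<lambda>t. 0) \<in> span_ind P"
  unfolding span_ind_def by (rule CollectI, rule exI[of _ "{}"]) auto

lemma span_ind_mem: "s \<in> P \<Longrightarrow> ind P s \<in> span_ind P"
  unfolding span_ind_def by (rule CollectI, rule exI[of _ "{s}"], rule exI[of _ "\<lambda>_. 1"]) auto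

lemma span_scale: "f \<in> span_ind P \<Longrightarrow> (\<lambda>t. a * f t) \<in> span_ind P"
proof -
  assume "f \<in> span_ind P"
  then obtain S c where S: "finite S" "S \<subseteq> P" and f: "f = (\<lambda>t. \<Sum>s\<in>S. c s * ind P s t)"
    unfolding span_ind_def by blast
  have "(\<lambda>t. a * f t) = (\<lambda>t. \<Sum>s\<in>S. (a * c s) * ind P s t)"
    by (simp add: f sum_distrib_left mult.assoc)
  thus ?thesis by (rule span_indI[OF S])
qed

lemma span_add: "f \<in> span_ind P \<Longrightarrow> g \<in> span_ind P \<Longrightarrow> (\<lambda>t. f t + g t) \<in> span_ind P"
proof -
  assume "f \<in> span_ind P" "g \<in> span_ind P"
  then obtain S1 c1 S2 c2 where S: "finite S1" "S1 \<subseteq> P" "finite S2" "S2 \<subseteq> P"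
    and f: "f = (\<lambda>t. \<Sum>s\<in>S1. c1 s * ind P s t)" and g: "g = (\<lambda>t. \<Sum>s\<in>S2. c2 s * ind P s t)"
    unfolding span_ind_def by blast
  define c where "c s = (if s \<in> S1 then c1 s else 0) + (if s \<in> S2 then c2 s else 0)" for s
  have "(\<lambda>t. f t + g t) = (\<lambda>t. \<Sum>s\<in>S1 \<union> S2. c s * ind P s t)"
  proof
    fix t
    have "(\<Sum>s\<in>S1 \<union> S2. c s * ind P s t) =
       (\<Sum>s\<in>S1 \<union> S2. (if s \<in> S1 then c1 s * ind P s t else 0)) +
       (\<Sum>s\<in>S1 \<union> S2. (if s \<in> S2 then c2 s * ind P s t else 0))"
      unfolding sum.distrib[symmetric] by (rule sum.cong) (auto simp: c_def distrib_right)
    also have "\<dots> = (\<Sum>s\<in>(S1 \<union> S2) \<inter> S1. c1 s * ind P s t) + (\<Sum>s\<in>(S1 \<union> S2) \<inter> S2. c2 s * ind P s t)"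
      using S by (simp only: sum.inter_restrict finite_Un)
    also have "\<dots> = f t + g t" by (simp add: f g Un_Int_eq)
    finally show "f t + g t = (\<Sum>s\<in>S1 \<union> S2. c s * ind P s t)" by simp
  qed
  thus ?thesis by (rule span_indI[rotated 2]) (use S in auto)
qed

lemma span_diff: "f \<in> span_ind P \<Longrightarrow> g \<in> span_ind P \<Longrightarrow> (\<lambda>t. f t - g t) \<in> span_ind P"
proof -
  assume "f \<in> span_ind P" "g \<in> span_ind P"
  hence "(\<lambda>t. f t + (-1) * g t) \<in> span_ind P" using span_add span_scale by blast
  thus ?thesis by simp
qed

lemma span_sum: "finite A \<Longrightarrow> (\<And>a. a \<in> A \<Longrightarrow> h a \<in> span_ind P) \<Longrightarrow> (\<lambda>t. \<Sum>a\<in>A. h a t) \<in> span_ind P"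
proof (induction A rule: finite_induct)
  case empty
  then show ?case using span_zero by simp
next
  case (insert x F)
  have "(\<lambda>t. h x t + (\<Sum>a\<in>F. h a t)) \<in> span_ind P"
    using insert by (intro span_add) auto
  then show ?case using insert by simp
qed

lemma ind_mult:
  assumes q: "qlo P" and a: "a \<in> P" and b: "b \<in> P"
  shows "(\<lambda>t. ind P a t * ind P b t) \<in> span_ind P"
proof (cases "\<exists>z\<in>P. pleq P a z \<and> pleq P b z")
  case True
  then obtain l where l: "l \<in> P" "pleq P a l" "pleq P b l"
    "\<forall>z\<in>P. pleq P a z \<and> pleq P b z \<longrightarrow> pleq P l z"
    using q unfolding qlo_def by blast
  have "(\<lambda>t. ind P a t * ind P b t) = ind P l"
  proof
    fix t
    show "ind P a t * ind P b t = ind P l t"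
    proof (cases "t \<in> P")
      case True
      have "(pleq P a t \<and> pleq P b t) \<longleftrightarrow> pleq P l t"
      proof
        assume "pleq P a t \<and> pleq P b t"
        thus "pleq P l t" using l(4) True by blast
      next
        assume "pleq P l t"
        thus "pleq P a t \<and> pleq P b t" using l(2,3) pleq_trans[OF q] by metis
      qed
      then show ?thesis unfolding ind_def by auto
    qed (simp add: ind_def)
  qed
  then show ?thesis using span_ind_mem[OF l(1)] by simp
next
  case False
  have "(\<lambda>t. ind P a t * ind P b t) = (\<lambda>t. 0)"
    using False unfolding ind_def by (auto simp: fun_eq_iff)
  then show ?thesis using span_zero by simp
qed

lemma span_mult_ind:
  assumes q: "qlo P" and f: "f \<in> span_ind P" and b: "b \<in> P"
  shows "(\<lambda>t. f t * ind P b t) \<in> span_ind P"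
proof -
  obtain S c where S: "finite S" "S \<subseteq> P" and f: "f = (\<lambda>t. \<Sum>s\<in>S. c s * ind P s t)"
    using f unfolding span_ind_def by blast
  have "(\<lambda>t. f t * ind P b t) = (\<lambda>t. \<Sum>s\<in>S. (\<lambda>s t. c s * (ind P s t * ind P b t)) s t)"
    by (simp add: f sum_distrib_right mult.assoc)
  also have "\<dots> \<in> span_ind P"
    using S ind_mult[OF q _ b] by (intro span_sum span_scale) auto
  finally show ?thesis .
qed

definition dlt :: "'g \<Rightarrow> 'g \<Rightarrow> complex" where
  "dlt s = (\<lambda>t. if t = s then 1 else 0)"

lemma prod_span:
  assumes q: "qlo P" and s: "s \<in> P" and F: "finite F" "F \<subseteq> P"
  shows "(\<lambda>t. ind P s t * (\<Prod>f\<in>F. 1 - ind P (s + f) t)) \<in> span_ind P"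
  using F
proof (induction F rule: finite_induct)
  case empty
  then show ?case using span_ind_mem[OF s] by simp
next
  case (insert f F)
  define g where "g = (\<lambda>t. ind P s t * (\<Prod>f\<in>F. 1 - ind P (s + f) t))"
  have g: "g \<in> span_ind P" using insert g_def by simp
  have sf: "s + f \<in> P" using insert qlo_add[OF q s] by simp
  have "(\<lambda>t. g t - g t * ind P (s + f) t) \<in> span_ind P"
    by (intro span_diff g span_mult_ind[OF q g sf])
  moreover have "(\<lambda>t. ind P s t * (\<Prod>f\<in>insert f F. 1 - ind P (s + f) t)) = (\<lambda>t. g t - g t * ind P (s + f) t)"
    using insert by (simp add: g_def fun_eq_iff algebra_simps)
  ultimately show ?case by simp
qed

lemma fesspe_delta:
  assumes q: "qlo P" and fe: "has_FESSPE P" and s: "s \<in> P"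
  shows "dlt s \<in> span_ind P"
proof -
  obtain F where F: "finite F" "F \<subseteq> P - {0}" and FP: "{f + p | f p. f \<in> F \<and> p \<in> P} = P - {0}"
    using fe unfolding has_FESSPE_def by blast
  have "dlt s = (\<lambda>t. ind P s t * (\<Prod>f\<in>F. 1 - ind P (s + f) t))"
  proof
    fix t
    show "dlt s t = ind P s t * (\<Prod>f\<in>F. 1 - ind P (s + f) t)"
    proof (cases "t \<in> P \<and> pleq P s t")
      case False
      have "t \<noteq> s"
      proof
        assume "t = s"
        then show False using False s qlo_zero[OF q] by (simp add: pleq_def)
      qed
      then show ?thesis using False by (auto simp: dlt_def ind_def)
    next
      case True
      define u where "u = - s + t"
      have u: "u \<in> P" using True by (simp add: u_def pleq_def)
      have tsu: "t = s + u" by (simp add: u_def)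
      show ?thesis
      proof (cases "u = 0")
        case True2: True
        have "\<forall>f\<in>F. ind P (s + f) t = 0"
        proof
          fix f assume fF: "f \<in> F"
          have "\<not> pleq P (s + f) t"
          proof
            assume "pleq P (s + f) t"
            hence "- (s + f) + s \<in> P" using tsu True2 by (simp add: pleq_def)
            hence "- f \<in> P" by (simp add: minus_add add.assoc)
            hence "f = 0" using qlo_antisym[OF q] fF F by blast
            thus False using fF F by blast
          qed
          thus "ind P (s + f) t = 0" by (simp add: ind_def)
        qed
        then show ?thesis using True True2 tsu by (simp add: dlt_def ind_def)
      next
        case False2: False
        have "u \<in> P - {0}" using u False2 by simp
        then obtain f p where fp: "u = f + p" "f \<in> F" "p \<in> P" using FP by blast
        have "- (s + f) + t = p" unfolding tsu fp(1) add.assoc[symmetric, of s f p] by (rule minus_add_cancel)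
        hence "ind P (s + f) t = 1" using fp True by (simp add: ind_def pleq_def)
        hence "(\<Prod>f\<in>F. 1 - ind P (s + f) t) = 0"
          using fp F by (intro prod_zero) auto
        moreover have "t \<noteq> s" using False2 u_def left_minus by metis
        ultimately show ?thesis by (simp add: dlt_def)
      qed
    qed
  qed
  also have "\<dots> \<in> span_ind P" using prod_span[OF q s] F by auto
  finally show ?thesis .
qed

lemma fin_supp_span:
  assumes q: "qlo P" and fe: "has_FESSPE P" and A: "finite A" "A \<subseteq> P"
    and g: "\<And>t. t \<notin> A \<Longrightarrow> g t = 0"
  shows "g \<in> span_ind P"
proof -
  have "g = (\<lambda>t. \<Sum>s\<in>A. g s * dlt s t)"
  proof
    fix t
    show "g t = (\<Sum>s\<in>A. g s * dlt s t)"
      using A g by (cases "t \<in> A") (auto simp: dlt_def if_distrib cong: if_cong)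
  qed
  also have "\<dots> \<in> span_ind P"
    using A by (intro span_sum span_scale fesspe_delta[OF q fe]) auto
  finally show ?thesis .
qed

lemma c0_bound: "f \<in> c0 P \<Longrightarrow> \<exists>B. \<forall>t. norm (f t) \<le> B"
proof -
  assume f: "f \<in> c0 P"
  define K where "K = {t\<in>P. 1 \<le> norm (f t)}"
  have K: "finite K" using f unfolding c0_def K_def by auto
  have "\<forall>t. norm (f t) \<le> 1 + (\<Sum>s\<in>K. norm (f s))"
  proof
    fix t
    have S0: "0 \<le> (\<Sum>s\<in>K. norm (f s))" by (simp add: sum_nonneg)
    show "norm (f t) \<le> 1 + (\<Sum>s\<in>K. norm (f s))"
    proof (cases "t \<in> K")
      case True
      have "norm (f t) \<le> (\<Sum>s\<in>K. norm (f s))"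
        using K True by (intro member_le_sum) auto
      then show ?thesis by simp
    next
      case False
      then have "norm (f t) \<le> 1" using f unfolding K_def c0_def by (cases "t \<in> P") auto
      then show ?thesis using S0 by simp
    qed
  qed
  thus ?thesis by blast
qed

lemma linf_bound: "f \<in> linf P \<Longrightarrow> \<exists>B. \<forall>t. norm (f t) \<le> B"
proof -
  assume f: "f \<in> linf P"
  then obtain a where a: "\<forall>x\<in>f ` P. norm x \<le> a" unfolding linf_def bounded_iff by blast
  have "\<forall>t. norm (f t) \<le> max a 0"
  proof
    fix t show "norm (f t) \<le> max a 0"
    proof (cases "t \<in> P")
      case True
      then have "norm (f t) \<le> a" using a by blast
      then show ?thesis by linarith
    next
      case False
      then show ?thesis using f unfolding linf_def by auto
    qed
  qed
  thus ?thesis by blast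
qed

lemma c0_linf: "f \<in> c0 P \<Longrightarrow> f \<in> linf P"
proof -
  assume f: "f \<in> c0 P"
  obtain B where B: "\<forall>t. norm (f t) \<le> B" using c0_bound[OF f] by blast
  have "bounded (f ` P)" unfolding bounded_iff using B by blast
  thus ?thesis using f unfolding linf_def c0_def by blast
qed

lemma span_bound: "g \<in> span_ind P \<Longrightarrow> \<exists>B. \<forall>t. norm (g t) \<le> B"
proof -
  assume "g \<in> span_ind P"
  then obtain S c where S: "finite S" and g: "g = (\<lambda>t. \<Sum>s\<in>S. c s * ind P s t)"
    unfolding span_ind_def by blast
  have "\<forall>t. norm (g t) \<le> (\<Sum>s\<in>S. norm (c s))"
  proof
    fix t
    have "norm (g t) \<le> (\<Sum>s\<in>S. norm (c s * ind P s t))" unfolding g by (rule norm_sum)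
    also have "\<dots> \<le> (\<Sum>s\<in>S. norm (c s))"
      by (intro sum_mono) (auto simp: ind_def norm_mult)
    finally show "norm (g t) \<le> (\<Sum>s\<in>S. norm (c s))" .
  qed
  thus ?thesis by blast
qed

lemma sup_dist_ge:
  assumes B: "\<And>t. t \<in> P \<Longrightarrow> norm (f t - g t) \<le> B" and t: "t \<in> P"
  shows "norm (f t - g t) \<le> sup_dist P f g"
  unfolding sup_dist_def
  by (rule cSUP_upper[OF t]) (rule bdd_aboveI2, rule B)

lemma sup_dist_le:
  assumes P: "P \<noteq> {}" and B: "\<And>t. t \<in> P \<Longrightarrow> norm (f t - g t) \<le> B"
  shows "sup_dist P f g \<le> B"
  unfolding sup_dist_def using P B by (rule cSUP_least)

lemma diff_bound:
  assumes "\<forall>t. norm (f t) \<le> B1" "\<forall>t. norm (g t) \<le> B2"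
  shows "norm (f t - g t) \<le> B1 + B2"
  by (metis add_mono assms norm_triangle_ineq4 order_trans)

lemma fesspe_c0:
  assumes q: "qlo P" and fe: "has_FESSPE P"
  shows "c0 P \<subseteq> BP P"
proof
  fix f assume f: "f \<in> c0 P"
  have "\<forall>e>0. \<exists>g\<in>span_ind P. sup_dist P f g < e"
  proof (intro allI impI)
    fix e :: real assume e: "e > 0"
    define K where "K = {t\<in>P. e/2 \<le> norm (f t)}"
    have "\<forall>e>0. finite {t\<in>P. e \<le> norm (f t)}" using f unfolding c0_def by blast
    hence K1: "finite K" using e unfolding K_def by (meson half_gt_zero)
    have K: "finite K" "K \<subseteq> P" using K1 unfolding K_def by auto
    define g where "g = (\<lambda>t. if t \<in> K then f t else 0)"
    have g: "g \<in> span_ind P" by (rule fin_supp_span[OF q fe K]) (simp add: g_def)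
    have "sup_dist P f g \<le> e/2"
    proof (rule sup_dist_le)
      show "P \<noteq> {}" using qlo_zero[OF q] by blast
      fix t assume "t \<in> P"
      then show "norm (f t - g t) \<le> e / 2" using e unfolding g_def K_def by auto
    qed
    then show "\<exists>g\<in>span_ind P. sup_dist P f g < e" using g e by force
  qed
  then show "f \<in> BP P" using c0_linf[OF f] unfolding BP_def by blast
qed

lemma dlt_c0: "s \<in> P \<Longrightarrow> dlt s \<in> c0 P"
proof -
  assume s: "s \<in> P"
  have "\<forall>e>0. finite {t\<in>P. e \<le> norm (dlt s t)}"
  proof (intro allI impI)
    fix e :: real assume "e > 0"
    hence "{t\<in>P. e \<le> norm (dlt s t)} \<subseteq> {s}" by (auto simp: dlt_def)
    thus "finite {t\<in>P. e \<le> norm (dlt s t)}" by (rule finite_subset) simp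
  qed
  thus ?thesis using s unfolding c0_def by (auto simp: dlt_def)
qed

lemma c0_fesspe:
  assumes q: "qlo P" and c: "c0 P \<subseteq> BP P"
  shows "has_FESSPE P"
proof -
  have z: "0 \<in> P" using qlo_zero[OF q] .
  have "dlt 0 \<in> BP P" using c dlt_c0[OF z] by blast
  hence ex: "\<forall>e>0. \<exists>g\<in>span_ind P. sup_dist P (dlt 0) g < e" unfolding BP_def by blast
  have h: "(1/2::real) > 0" by simp
  obtain g where g: "g \<in> span_ind P" and gd: "sup_dist P (dlt 0) g < 1/2"
    using ex h by blast
  obtain S c where S: "finite S" "S \<subseteq> P" and gS: "g = (\<lambda>t. \<Sum>s\<in>S. c s * ind P s t)"
    using g unfolding span_ind_def by blast
  obtain Bg where Bg: "\<forall>t. norm (g t) \<le> Bg" using span_bound[OF g] by blast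
  have Bd: "\<forall>t. norm (dlt 0 t) \<le> 1" by (simp add: dlt_def)
  have near: "norm (dlt 0 t - g t) < 1/2" if "t \<in> P" for t
  proof -
    have "norm (dlt 0 t - g t) \<le> sup_dist P (dlt 0) g"
      by (rule sup_dist_ge[where B="1+Bg"]) (use diff_bound[OF Bd Bg] that in auto)
    then show ?thesis using gd by linarith
  qed
  define F where "F = S - {0}"
  have F: "finite F" "F \<subseteq> P - {0}" using S by (auto simp: F_def)
  have cover: "\<exists>f\<in>F. pleq P f t" if t: "t \<in> P" "t \<noteq> 0" for t
  proof (rule ccontr)
    assume nf: "\<not> (\<exists>f\<in>F. pleq P f t)"
    have "\<forall>s\<in>S. ind P s t = ind P s 0"
    proof
      fix s assume sS: "s \<in> S"
      show "ind P s t = ind P s 0"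
      proof (cases "s = 0")
        case True
        then show ?thesis using t z by (simp add: ind_def pleq_def)
      next
        case False
        have "\<not> pleq P s t" using nf sS False F_def by blast
        moreover have "\<not> pleq P s 0"
        proof
          assume "pleq P s 0"
          hence "- s \<in> P" by (simp add: pleq_def)
          hence "s = 0" using qlo_antisym[OF q] sS S by blast
          thus False using False by simp
        qed
        ultimately show ?thesis by (simp add: ind_def)
      qed
    qed
    hence gt: "g t = g 0" unfolding gS by (intro sum.cong) auto
    have n1: "norm (1 - g 0) < 1/2" using near[OF z] by (simp add: dlt_def)
    have n2: "norm (0 - g t) < 1/2" using near[OF t(1)] t(2) by (simp add: dlt_def)
    have "norm (1::complex) \<le> norm (g 0) + norm (1 - g 0)" by (rule norm_triangle_sub)
    thus False using n1 n2 gt by simp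
  qed
  have "{f + p | f p. f \<in> F \<and> p \<in> P} = P - {0}"
  proof
    show "{f + p | f p. f \<in> F \<and> p \<in> P} \<subseteq> P - {0}"
    proof
      fix x assume "x \<in> {f + p | f p. f \<in> F \<and> p \<in> P}"
      then obtain f p where fp: "x = f + p" "f \<in> F" "p \<in> P" by blast
      have fP: "f \<in> P" "f \<noteq> 0" using fp F by auto
      have "x \<in> P" using fp fP qlo_add[OF q] by simp
      moreover have "x \<noteq> 0"
      proof
        assume "x = 0"
        hence "f = - p" using fp by (simp add: eq_neg_iff_add_eq_0)
        hence "- f \<in> P" using fp by simp
        thus False using qlo_antisym[OF q fP(1)] fP by blast
      qed
      ultimately show "x \<in> P - {0}" by simp
    qed
  next
    show "P - {0} \<subseteq> {f + p | f p. f \<in> F \<and> p \<in> P}"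
    proof
      fix t assume t: "t \<in> P - {0}"
      then obtain f where f: "f \<in> F" "pleq P f t" using cover by blast
      have "t = f + (- f + t)" by simp
      thus "t \<in> {f + p | f p. f \<in> F \<and> p \<in> P}" using f unfolding pleq_def by blast
    qed
  qed
  thus ?thesis using F unfolding has_FESSPE_def by blast
qed

lemma c0_fin: "f \<in> c0 P \<Longrightarrow> e > 0 \<Longrightarrow> finite {t\<in>P. e \<le> norm (f t)}"
  unfolding c0_def by blast

lemma c0_zero: "(\<lambda>t. 0) \<in> c0 P"
  unfolding c0_def by auto

lemma c0_add:
  assumes f: "f \<in> c0 P" and g: "g \<in> c0 P"
  shows "(\<lambda>t. f t + g t) \<in> c0 P"
proof -
  have "finite {t\<in>P. e \<le> norm (f t + g t)}" if e: "e > 0" for e :: real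
  proof -
    have "finite {t\<in>P. e/2 \<le> norm (f t)}" "finite {t\<in>P. e/2 \<le> norm (g t)}"
      using c0_fin[OF f half_gt_zero[OF e]] c0_fin[OF g half_gt_zero[OF e]] .
    moreover have "{t\<in>P. e \<le> norm (f t + g t)} \<subseteq> {t\<in>P. e/2 \<le> norm (f t)} \<union> {t\<in>P. e/2 \<le> norm (g t)}"
    proof
      fix t assume "t \<in> {t\<in>P. e \<le> norm (f t + g t)}"
      moreover have "norm (f t + g t) \<le> norm (f t) + norm (g t)" by (rule norm_triangle_ineq)
      ultimately show "t \<in> {t\<in>P. e/2 \<le> norm (f t)} \<union> {t\<in>P. e/2 \<le> norm (g t)}" by auto
    qed
    ultimately show ?thesis by (meson finite_Un finite_subset)
  qed
  then show ?thesis using f g unfolding c0_def by auto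
qed

lemma c0_mult_bdd:
  assumes a: "\<forall>t. norm (a t) \<le> B" and x: "x \<in> c0 P"
  shows "(\<lambda>t. a t * x t) \<in> c0 P" "(\<lambda>t. x t * a t) \<in> c0 P"
proof -
  define B' where "B' = max B 1"
  have B'1: "B' > 0" unfolding B'_def by simp
  have B'2: "\<forall>t. norm (a t) \<le> B'"
  proof
    fix t have "norm (a t) \<le> B" using a by blast
    thus "norm (a t) \<le> B'" unfolding B'_def by (simp add: le_max_iff_disj)
  qed
  note B' = B'1 B'2
  have fin: "finite {t\<in>P. e \<le> norm (a t * x t)}" if e: "e > 0" for e :: real
  proof -
    have "finite {t\<in>P. e / B' \<le> norm (x t)}"
      using c0_fin[OF x divide_pos_pos[OF e B'1]] .
    moreover have "{t\<in>P. e \<le> norm (a t * x t)} \<subseteq> {t\<in>P. e / B' \<le> norm (x t)}"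
    proof
      fix t assume t: "t \<in> {t\<in>P. e \<le> norm (a t * x t)}"
      have "norm (a t * x t) \<le> B' * norm (x t)"
        unfolding norm_mult using B' by (intro mult_right_mono) auto
      hence "e \<le> B' * norm (x t)" using t by auto
      hence "e / B' \<le> norm (x t)" using B' by (simp add: divide_le_eq mult.commute)
      thus "t \<in> {t\<in>P. e / B' \<le> norm (x t)}" using t by auto
    qed
    ultimately show ?thesis by (rule finite_subset[rotated])
  qed
  show "(\<lambda>t. a t * x t) \<in> c0 P" using fin x unfolding c0_def by auto
  show "(\<lambda>t. x t * a t) \<in> c0 P" using fin x unfolding c0_def by (auto simp: mult.commute)
qed

lemma c0_scale: "f \<in> c0 P \<Longrightarrow> (\<lambda>t. c * f t) \<in> c0 P"
  using c0_mult_bdd(1)[of "\<lambda>_. c" "norm c" f P] by simp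

lemma c0_closed:
  assumes a0: "\<And>t. t \<notin> P \<Longrightarrow> a t = 0"
    and ap: "\<And>e. e > 0 \<Longrightarrow> \<exists>x\<in>c0 P. \<forall>t\<in>P. norm (a t - x t) < e"
  shows "a \<in> c0 P"
proof -
  have "finite {t\<in>P. e \<le> norm (a t)}" if e: "e > 0" for e :: real
  proof -
    obtain x where x: "x \<in> c0 P" "\<forall>t\<in>P. norm (a t - x t) < e/2" using ap[of "e/2"] e by auto
    have "finite {t\<in>P. e/2 \<le> norm (x t)}" using c0_fin[OF x(1) half_gt_zero[OF e]] .
    moreover have "{t\<in>P. e \<le> norm (a t)} \<subseteq> {t\<in>P. e/2 \<le> norm (x t)}"
    proof
      fix t assume t: "t \<in> {t\<in>P. e \<le> norm (a t)}"
      have "norm (a t) \<le> norm (x t) + norm (a t - x t)" by (rule norm_triangle_sub)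
      thus "t \<in> {t\<in>P. e/2 \<le> norm (x t)}" using t x by force
    qed
    ultimately show ?thesis by (rule finite_subset[rotated])
  qed
  thus ?thesis using a0 unfolding c0_def by auto
qed

lemma BP_bound: "f \<in> BP P \<Longrightarrow> \<exists>B. \<forall>t. norm (f t) \<le> B"
  unfolding BP_def using linf_bound by blast

lemma BP_zero_out: "f \<in> BP P \<Longrightarrow> t \<notin> P \<Longrightarrow> f t = 0"
  unfolding BP_def linf_def by blast

lemma single_supp:
  fixes h :: "'a \<Rightarrow> real"
  assumes t0: "t0 \<in> P" and h: "\<And>t. t \<noteq> t0 \<Longrightarrow> h t = 0"
  shows "h summable_on P" "infsum h P = h t0"
proof -
  have "h summable_on P \<longleftrightarrow> h summable_on {t0}"
    by (rule summable_on_cong_neutral) (use h t0 in auto)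
  thus "h summable_on P" by simp
  have "infsum h P = infsum h {t0}"
    by (rule infsum_cong_neutral) (use h t0 in auto)
  thus "infsum h P = h t0" by simp
qed

lemma op_dist_ge:
  assumes B: "\<And>t. t \<in> P \<Longrightarrow> norm (f t - g t) \<le> B" and t0: "t0 \<in> P"
  shows "norm (f t0 - g t0) \<le> op_dist P (mult_op f) (mult_op g)"
proof -
  define X where "X = {l2norm P (\<lambda>t. mult_op f x t - mult_op g x t) | x. x \<in> l2 P \<and> l2norm P x \<le> 1}"
  have B0: "0 \<le> B" using B[OF t0] norm_ge_zero order_trans by blast
  define d where "d = (\<lambda>t. if t = t0 then (1::complex) else 0)"
  have d1: "(\<lambda>t. (norm (d t))\<^sup>2) summable_on P" "infsum (\<lambda>t. (norm (d t))\<^sup>2) P = 1"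
    using single_supp[OF t0, of "\<lambda>t. (norm (d t))\<^sup>2"] by (auto simp: d_def)
  have dl2: "d \<in> l2 P" unfolding l2_def using d1 t0 by (auto simp: d_def)
  have dn: "l2norm P d = 1" unfolding l2norm_def using d1 by simp
  have "infsum (\<lambda>t. (norm (mult_op f d t - mult_op g d t))\<^sup>2) P = (norm (f t0 - g t0))\<^sup>2"
    using single_supp(2)[OF t0, of "\<lambda>t. (norm (mult_op f d t - mult_op g d t))\<^sup>2"]
    by (auto simp: d_def mult_op_def)
  hence "l2norm P (\<lambda>t. mult_op f d t - mult_op g d t) = norm (f t0 - g t0)"
    unfolding l2norm_def by simp
  hence mem: "norm (f t0 - g t0) \<in> X" unfolding X_def using dl2 dn by force
  have bdd: "bdd_above X"
  proof (rule bdd_aboveI)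
    fix y assume "y \<in> X"
    then obtain x where y: "y = l2norm P (\<lambda>t. mult_op f x t - mult_op g x t)"
      and x: "x \<in> l2 P" "l2norm P x \<le> 1" unfolding X_def by blast
    have xs: "(\<lambda>t. (norm (x t))\<^sup>2) summable_on P" using x unfolding l2_def by blast
    have xi: "infsum (\<lambda>t. (norm (x t))\<^sup>2) P \<le> 1" using x(2) unfolding l2norm_def by simp
    have pt: "(norm (mult_op f x t - mult_op g x t))\<^sup>2 \<le> B\<^sup>2 * (norm (x t))\<^sup>2" if t: "t \<in> P" for t
    proof -
      have "(norm (mult_op f x t - mult_op g x t))\<^sup>2 = (norm (f t - g t))\<^sup>2 * (norm (x t))\<^sup>2"
        by (simp add: mult_op_def left_diff_distrib[symmetric] norm_mult power_mult_distrib)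
      also have "\<dots> \<le> B\<^sup>2 * (norm (x t))\<^sup>2"
        by (intro mult_right_mono power_mono B[OF t]) auto
      finally show ?thesis .
    qed
    have bs: "(\<lambda>t. B\<^sup>2 * (norm (x t))\<^sup>2) summable_on P"
      using xs by (rule summable_on_cmult_right)
    have hs: "(\<lambda>t. (norm (mult_op f x t - mult_op g x t))\<^sup>2) summable_on P"
      by (rule summable_on_comparison_test[OF bs pt]) auto
    have "infsum (\<lambda>t. (norm (mult_op f x t - mult_op g x t))\<^sup>2) P \<le> infsum (\<lambda>t. B\<^sup>2 * (norm (x t))\<^sup>2) P"
      by (rule infsum_mono[OF hs bs pt])
    also have "\<dots> = B\<^sup>2 * infsum (\<lambda>t. (norm (x t))\<^sup>2) P"
      by (rule infsum_cmult_right) (use xs in auto)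
    also have "\<dots> \<le> B\<^sup>2 * 1" by (rule mult_left_mono[OF xi]) simp
    finally have "infsum (\<lambda>t. (norm (mult_op f x t - mult_op g x t))\<^sup>2) P \<le> B\<^sup>2" by simp
    hence "y \<le> sqrt (B\<^sup>2)" unfolding y l2norm_def by (rule real_sqrt_le_mono)
    thus "y \<le> B" using B0 by simp
  qed
  show ?thesis unfolding op_dist_def using cSup_upper[OF mem bdd] unfolding X_def .
qed

lemma fun_ideal:
  assumes q: "qlo P" and c: "c0 P \<subseteq> BP P"
  shows "fun_essential_ideal P (BP P) (c0 P)"
  unfolding fun_essential_ideal_def is_essential_ideal_def
proof (intro conjI allI impI)
  show "is_closed_ideal (\<lambda>f g t. f t + g t) (\<lambda>f g t. f t * g t) (\<lambda>c f t. c * f t) (\<lambda>t. 0)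
     (sup_dist P) (BP P) (c0 P)"
    unfolding is_closed_ideal_def
  proof (intro conjI ballI allI impI)
    show "c0 P \<subseteq> BP P" by (rule c)
    show "(\<lambda>t. 0) \<in> c0 P" by (rule c0_zero)
    show "(\<lambda>t. x t + y t) \<in> c0 P" if "x \<in> c0 P" "y \<in> c0 P" for x y using c0_add that .
    show "(\<lambda>t. k * x t) \<in> c0 P" if "x \<in> c0 P" for k x using c0_scale that .
    fix a x assume a: "a \<in> BP P" and x: "x \<in> c0 P"
    obtain B where "\<forall>t. norm (a t) \<le> B" using BP_bound[OF a] by blast
    then show "(\<lambda>t. a t * x t) \<in> c0 P" "(\<lambda>t. x t * a t) \<in> c0 P"
      using c0_mult_bdd x by blast+
  next
    fix a assume a: "a \<in> BP P" and ap: "\<forall>e>0. \<exists>x\<in>c0 P. sup_dist P a x < e"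
    obtain Ba where Ba: "\<forall>t. norm (a t) \<le> Ba" using BP_bound[OF a] by blast
    show "a \<in> c0 P"
    proof (rule c0_closed)
      show "\<And>t. t \<notin> P \<Longrightarrow> a t = 0" using BP_zero_out[OF a] .
      fix e :: real assume e: "e > 0"
      then obtain x where x: "x \<in> c0 P" "sup_dist P a x < e" using ap by blast
      obtain Bx where Bx: "\<forall>t. norm (x t) \<le> Bx" using c0_bound[OF x(1)] by blast
      have "\<forall>t\<in>P. norm (a t - x t) < e"
      proof
        fix t assume t: "t \<in> P"
        have "norm (a t - x t) \<le> sup_dist P a x"
          by (rule sup_dist_ge[where B="Ba+Bx"]) (use diff_bound[OF Ba Bx] t in auto)
        thus "norm (a t - x t) < e" using x(2) by linarith
      qed
      thus "\<exists>x\<in>c0 P. \<forall>t\<in>P. norm (a t - x t) < e" using x(1) by blast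
    qed
  qed
next
  fix J assume J: "is_closed_ideal (\<lambda>f g t. f t + g t) (\<lambda>f g t. f t * g t) (\<lambda>c f t. c * f t) (\<lambda>t. 0)
     (sup_dist P) (BP P) J \<and> J \<noteq> {\<lambda>t. 0}"
  have JA: "J \<subseteq> BP P" and z: "(\<lambda>t. 0) \<in> J"
    and mu: "\<forall>a\<in>BP P. \<forall>x\<in>J. (\<lambda>t. a t * x t) \<in> J"
    using J unfolding is_closed_ideal_def by blast+
  obtain f where f: "f \<in> J" "f \<noteq> (\<lambda>t. 0)" using J z by blast
  then obtain t0 where ft0: "f t0 \<noteq> 0" by (meson ext)
  have fB: "f \<in> BP P" using f JA by blast
  have t0: "t0 \<in> P" using BP_zero_out[OF fB] ft0 by blast
  have dc: "dlt t0 \<in> c0 P" by (rule dlt_c0[OF t0])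
  have hJ: "(\<lambda>t. dlt t0 t * f t) \<in> J" using mu c dc f(1) by blast
  obtain B where "\<forall>t. norm (f t) \<le> B" using BP_bound[OF fB] by blast
  hence hc: "(\<lambda>t. dlt t0 t * f t) \<in> c0 P" using c0_mult_bdd(2) dc by blast
  have hnz: "(\<lambda>t. dlt t0 t * f t) \<noteq> (\<lambda>t. 0)"
  proof
    assume "(\<lambda>t. dlt t0 t * f t) = (\<lambda>t. 0)"
    hence "dlt t0 t0 * f t0 = 0" by meson
    thus False using ft0 by (simp add: dlt_def)
  qed
  show "c0 P \<inter> J \<noteq> {\<lambda>t. 0}" using hJ hc hnz by blast
qed

lemma mult_op_inj: "mult_op f = mult_op g \<Longrightarrow> f = g"
proof
  fix t assume "mult_op f = mult_op g"
  hence "mult_op f (\<lambda>_. 1) t = mult_op g (\<lambda>_. 1) t" by simp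
  thus "f t = g t" by (simp add: mult_op_def)
qed

lemma mult_op_zero: "(\<lambda>x t. 0) = mult_op (\<lambda>t. 0)"
  by (simp add: mult_op_def)

lemma op_ideal:
  assumes q: "qlo P" and c: "c0 P \<subseteq> BP P"
  shows "op_essential_ideal P (Diag P) (c0_iota P)"
  unfolding op_essential_ideal_def is_essential_ideal_def Diag_def c0_iota_def
proof (intro conjI allI impI)
  show "is_closed_ideal (\<lambda>S T x t. S x t + T x t) (\<lambda>S T. S \<circ> T) (\<lambda>c S x t. c * S x t) (\<lambda>x t. 0)
     (op_dist P) (mult_op ` BP P) (mult_op ` c0 P)"
    unfolding is_closed_ideal_def
  proof (intro conjI ballI allI impI)
    show "mult_op ` c0 P \<subseteq> mult_op ` BP P" using c by blast
    show "(\<lambda>x t. 0) \<in> mult_op ` c0 P" unfolding mult_op_zero using c0_zero by blast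
    fix S T assume "S \<in> mult_op ` c0 P" "T \<in> mult_op ` c0 P"
    then obtain f g where fg: "f \<in> c0 P" "g \<in> c0 P" "S = mult_op f" "T = mult_op g" by blast
    have "(\<lambda>x t. S x t + T x t) = mult_op (\<lambda>t. f t + g t)"
      unfolding fg mult_op_def by (simp add: distrib_right)
    thus "(\<lambda>x t. S x t + T x t) \<in> mult_op ` c0 P" using c0_add[OF fg(1,2)] by blast
  next
    fix k S assume "S \<in> mult_op ` c0 P"
    then obtain f where f: "f \<in> c0 P" "S = mult_op f" by blast
    have "(\<lambda>x t. k * S x t) = mult_op (\<lambda>t. k * f t)"
      unfolding f mult_op_def by (simp add: mult.assoc)
    thus "(\<lambda>x t. k * S x t) \<in> mult_op ` c0 P" using c0_scale[OF f(1)] by blast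
  next
    fix A X assume "A \<in> mult_op ` BP P" "X \<in> mult_op ` c0 P"
    then obtain a x where ax: "a \<in> BP P" "x \<in> c0 P" "A = mult_op a" "X = mult_op x" by blast
    obtain B where B: "\<forall>t. norm (a t) \<le> B" using BP_bound[OF ax(1)] by blast
    have "A \<circ> X = mult_op (\<lambda>t. a t * x t)" "X \<circ> A = mult_op (\<lambda>t. x t * a t)"
      unfolding ax mult_op_def by (auto simp: mult.assoc)
    thus "A \<circ> X \<in> mult_op ` c0 P" "X \<circ> A \<in> mult_op ` c0 P"
      using c0_mult_bdd[OF B ax(2)] by auto
  next
    fix A assume "A \<in> mult_op ` BP P" and ap: "\<forall>e>0. \<exists>X\<in>mult_op ` c0 P. op_dist P A X < e"
    then obtain a where a: "a \<in> BP P" "A = mult_op a" by blast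
    obtain Ba where Ba: "\<forall>t. norm (a t) \<le> Ba" using BP_bound[OF a(1)] by blast
    have "a \<in> c0 P"
    proof (rule c0_closed)
      show "\<And>t. t \<notin> P \<Longrightarrow> a t = 0" using BP_zero_out[OF a(1)] .
      fix e :: real assume e: "e > 0"
      then obtain X where X: "X \<in> mult_op ` c0 P" "op_dist P A X < e" using ap by blast
      then obtain x where x: "x \<in> c0 P" "X = mult_op x" by blast
      obtain Bx where Bx: "\<forall>t. norm (x t) \<le> Bx" using c0_bound[OF x(1)] by blast
      have "\<forall>t\<in>P. norm (a t - x t) < e"
      proof
        fix t assume t: "t \<in> P"
        have "norm (a t - x t) \<le> op_dist P (mult_op a) (mult_op x)"
          by (rule op_dist_ge[where B="Ba+Bx"]) (use diff_bound[OF Ba Bx] t in auto)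
        thus "norm (a t - x t) < e" using X(2) a(2) x(2) by simp
      qed
      thus "\<exists>x\<in>c0 P. \<forall>t\<in>P. norm (a t - x t) < e" using x(1) by blast
    qed
    thus "A \<in> mult_op ` c0 P" using a(2) by blast
  qed
next
  fix J assume J: "is_closed_ideal (\<lambda>S T x t. S x t + T x t) (\<lambda>S T. S \<circ> T) (\<lambda>c S x t. c * S x t) (\<lambda>x t. 0)
     (op_dist P) (mult_op ` BP P) J \<and> J \<noteq> {\<lambda>x t. 0}"
  have JA: "J \<subseteq> mult_op ` BP P" and z: "(\<lambda>x t. 0) \<in> J"
    and mu: "\<forall>a\<in>mult_op ` BP P. \<forall>x\<in>J. a \<circ> x \<in> J"
    using J unfolding is_closed_ideal_def by blast+
  obtain S where S: "S \<in> J" "S \<noteq> (\<lambda>x t. 0)" using J z by blast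
  then obtain f where fB: "f \<in> BP P" and Sf: "S = mult_op f" using JA by blast
  have "f \<noteq> (\<lambda>t. 0)" using S(2) Sf mult_op_zero by metis
  then obtain t0 where ft0: "f t0 \<noteq> 0" by (meson ext)
  have t0: "t0 \<in> P" using BP_zero_out[OF fB] ft0 by blast
  have dc: "dlt t0 \<in> c0 P" by (rule dlt_c0[OF t0])
  have "mult_op (dlt t0) \<circ> S \<in> J" using mu c dc S(1) by blast
  moreover have "mult_op (dlt t0) \<circ> S = mult_op (\<lambda>t. dlt t0 t * f t)"
    unfolding Sf mult_op_def by (auto simp: mult.assoc)
  ultimately have hJ: "mult_op (\<lambda>t. dlt t0 t * f t) \<in> J" by simp
  obtain B where "\<forall>t. norm (f t) \<le> B" using BP_bound[OF fB] by blast
  hence hc: "(\<lambda>t. dlt t0 t * f t) \<in> c0 P" using c0_mult_bdd(2) dc by blast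
  have hnz: "mult_op (\<lambda>t. dlt t0 t * f t) \<noteq> (\<lambda>x t. 0)"
  proof
    assume "mult_op (\<lambda>t. dlt t0 t * f t) = (\<lambda>x t. 0)"
    hence "mult_op (\<lambda>t. dlt t0 t * f t) (\<lambda>_. 1) t0 = 0" by simp
    thus False using ft0 by (simp add: dlt_def mult_op_def)
  qed
  show "mult_op ` c0 P \<inter> J \<noteq> {\<lambda>x t. 0}" using hJ hc hnz by blast
qed

theorem lemma6p4:
  fixes P :: "'g::group_add set"
  assumes "qlo P"
  shows "(has_FESSPE P \<longleftrightarrow> c0 P \<subseteq> BP P)
       \<and> (c0 P \<subseteq> BP P \<longleftrightarrow> fun_essential_ideal P (BP P) (c0 P))
       \<and> (fun_essential_ideal P (BP P) (c0 P) \<longleftrightarrow> op_essential_ideal P (Diag P) (c0_iota P))"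
proof -
  have 1: "has_FESSPE P \<longleftrightarrow> c0 P \<subseteq> BP P"
    using fesspe_c0[OF assms] c0_fesspe[OF assms] by blast
  have 2: "c0 P \<subseteq> BP P \<longleftrightarrow> fun_essential_ideal P (BP P) (c0 P)"
  proof
    assume "fun_essential_ideal P (BP P) (c0 P)"
    thus "c0 P \<subseteq> BP P" unfolding fun_essential_ideal_def is_essential_ideal_def is_closed_ideal_def
      by blast
  qed (rule fun_ideal[OF assms])
  have 3: "c0 P \<subseteq> BP P \<longleftrightarrow> op_essential_ideal P (Diag P) (c0_iota P)"
  proof
    assume "op_essential_ideal P (Diag P) (c0_iota P)"
    hence sub: "mult_op ` c0 P \<subseteq> mult_op ` BP P"
      unfolding op_essential_ideal_def is_essential_ideal_def is_closed_ideal_def Diag_def c0_iota_def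
      by blast
    show "c0 P \<subseteq> BP P"
    proof
      fix f assume "f \<in> c0 P"
      then obtain g where "g \<in> BP P" "mult_op f = mult_op g" using sub by blast
      thus "f \<in> BP P" using mult_op_inj by metis
    qed
  qed (rule op_ideal[OF assms])
  show ?thesis using 1 2 3 by blast
qed

end
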